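(* Let $k\geq 2$ be an integer and let $B\in M_{4k}(\mathbb{F}_2)$ be a non-derogative matrix. Then there exist $N,D\in M_{4k}(\mathbb{F}_2)$ with $B=N+D$, $N^2=0$ and $D^4=D$.
   Context: A square matrix is non-derogative if its minimal polynomial equals its characteristic polynomial. $\mathbb{F}_2$ denotes the field with two elements. *)

theory Defs
  imports "Jordan_Normal_Form.Char_Poly" "Berlekamp_Zassenhaus.Finite_Field"
begin

text \<open>The field with two elements: integers modulo CARD(bool) = 2.\<close>
type_synonym F2 = "bool mod_ring"

definition poly_mat :: "'a :: comm_ring_1 poly \<Rightarrow> 'a mat \<Rightarrow> 'a mat" where
  "poly_mat p A = foldr (\<lambda>c M. c \<cdot>\<^sub>m 1\<^sub>m (dim_row A) + A * M) (coeffs p)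
                        (0\<^sub>m (dim_row A) (dim_row A))"

definition minimal_poly :: "'a :: field mat \<Rightarrow> 'a poly" where
  "minimal_poly A = (THE p. monic p \<and> poly_mat p A = 0\<^sub>m (dim_row A) (dim_row A) \<and>
      (\<forall>q. q \<noteq> 0 \<longrightarrow> poly_mat q A = 0\<^sub>m (dim_row A) (dim_row A) \<longrightarrow> degree p \<le> degree q))"

definition non_derogatory :: "'a :: field mat \<Rightarrow> bool" where
  "non_derogatory A \<longleftrightarrow> minimal_poly A = char_poly A"

end

theory Submission
  imports Defs
begin

lemma F2_cases: "(x::F2) = 0 \<or> x = 1"
proof -
  obtain i where "i < CARD(bool)" "x = of_nat i" using surj_of_nat_mod_ring[of x] by auto
  then show ?thesis by (cases i; auto simp: less_Suc_eq)
qed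

lemma F2_one_one[simp]: "(1::F2) + 1 = 0"
proof -
  have "(of_nat (CARD(bool)) :: F2) = 0" by (rule of_nat_card_eq_0)
  thus ?thesis by simp
qed

lemma F2_two[simp]: "(2::F2) = 0"
  using F2_one_one by (metis one_add_one)

lemma F2_add_self[simp]: "(x::F2) + x = 0"
  using F2_cases[of x] by auto

lemma pm_0[simp]: "poly_mat 0 A = 0\<^sub>m (dim_row A) (dim_row A)"
  unfolding poly_mat_def by simp

lemma pm_pCons: assumes A: "A \<in> carrier_mat n n"
  shows "poly_mat (pCons a p) A = a \<cdot>\<^sub>m 1\<^sub>m n + A * poly_mat p A"
proof (cases "p = 0 \<and> a = 0")
  case True
  then show ?thesis using A by (auto simp: poly_mat_def)
next
  case False
  then have "coeffs (pCons a p) = a # coeffs p"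
    by (auto simp: coeffs_pCons_eq_cCons cCons_def)
  then show ?thesis using A unfolding poly_mat_def by simp
qed

lemma pm_carrier[simp]: assumes A: "A \<in> carrier_mat n n"
  shows "poly_mat p A \<in> carrier_mat n n"
proof (induction p)
  case 0
  then show ?case using A by simp
next
  case (pCons a p)
  then show ?case using A by (simp add: pm_pCons)
qed

lemma pm_add: assumes A: "A \<in> carrier_mat n n"
  shows "poly_mat (p + q) A = poly_mat p A + poly_mat q A"
proof (induction p arbitrary: q)
  case 0
  then show ?case using A by simp
next
  case (pCons a p)
  obtain b q' where q: "q = pCons b q'" by (cases q)
  have c1: "poly_mat p A \<in> carrier_mat n n" "poly_mat q' A \<in> carrier_mat n n" using A by auto
  show ?case unfolding q add_pCons pm_pCons[OF A] pCons mult_add_distrib_mat[OF A c1]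
    by (rule eq_matI, insert A c1 carrier_matD[OF A] carrier_matD[OF c1(1)] carrier_matD[OF c1(2)], auto simp: algebra_simps)
qed

lemma pm_smult: assumes A: "A \<in> carrier_mat n n"
  shows "poly_mat (Polynomial.smult c p) A = c \<cdot>\<^sub>m poly_mat p A"
proof (induction p)
  case 0
  then show ?case using A by simp
next
  case (pCons a p)
  have c1: "poly_mat p A \<in> carrier_mat n n" using A by auto
  show ?case unfolding smult_pCons pm_pCons[OF A] pCons mult_smult_distrib[OF A c1]
    by (rule eq_matI, insert A c1 carrier_matD[OF A] carrier_matD[OF c1(1)] , auto simp: algebra_simps)
qed

lemma pm_mult: assumes A: "A \<in> carrier_mat n n"
  shows "poly_mat (p * q) A = poly_mat p A * poly_mat q A"
proof (induction p)
  case 0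
  then show ?case using A left_mult_zero_mat[OF pm_carrier[OF A, of q], of n] by simp
next
  case (pCons a p)
  have c1: "poly_mat p A \<in> carrier_mat n n" "poly_mat q A \<in> carrier_mat n n"
     "poly_mat (p*q) A \<in> carrier_mat n n" using A by auto
  have "poly_mat (pCons a p * q) A = poly_mat (Polynomial.smult a q + pCons 0 (p * q)) A" by simp
  also have "\<dots> = a \<cdot>\<^sub>m poly_mat q A + A * (poly_mat p A * poly_mat q A)"
    unfolding pm_add[OF A] pm_smult[OF A] pm_pCons[OF A] pCons
    by (rule eq_matI, insert A c1 carrier_matD[OF c1(1)] carrier_matD[OF c1(2)] carrier_matD[OF A], auto)
  also have "\<dots> = (a \<cdot>\<^sub>m 1\<^sub>m n + A * poly_mat p A) * poly_mat q A"
  proof -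
    have o: "a \<cdot>\<^sub>m 1\<^sub>m n \<in> carrier_mat n n" "A * poly_mat p A \<in> carrier_mat n n" using A c1 by auto
    show ?thesis
      unfolding add_mult_distrib_mat[OF o c1(2)] mult_smult_assoc_mat[OF one_carrier_mat c1(2)]
        left_mult_one_mat[OF c1(2)] assoc_mult_mat[OF A c1(1) c1(2)] ..
  qed
  finally show ?case unfolding pm_pCons[OF A] .
qed

definition ev :: "'a::comm_ring_1 mat \<Rightarrow> 'a poly \<Rightarrow> 'a vec \<Rightarrow> 'a vec" where
  "ev A q v = poly_mat q A *\<^sub>v v"

context
  fixes A :: "'a :: field mat" and n :: nat
  assumes A: "A \<in> carrier_mat n n"
begin

lemma ev_dim[simp]: "dim_vec (ev A q v) = n"
  using pm_carrier[OF A, of q] unfolding ev_def carrier_mat_def by simp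

lemma ev_carrier[simp]: "ev A q v \<in> carrier_vec n"
  using pm_carrier[OF A, of q] unfolding ev_def carrier_vec_def carrier_mat_def by simp

lemma ev_add: "v \<in> carrier_vec n \<Longrightarrow> ev A (p + q) v = ev A p v + ev A q v"
  unfolding ev_def pm_add[OF A] by (rule add_mult_distrib_mat_vec[OF pm_carrier[OF A] pm_carrier[OF A]])

lemma ev_mult: "v \<in> carrier_vec n \<Longrightarrow> ev A (p * q) v = ev A p (ev A q v)"
  unfolding ev_def pm_mult[OF A] by (rule assoc_mult_mat_vec[OF pm_carrier[OF A] pm_carrier[OF A]])

lemma ev_smult: "v \<in> carrier_vec n \<Longrightarrow> ev A (Polynomial.smult c p) v = c \<cdot>\<^sub>v ev A p v"
  unfolding ev_def pm_smult[OF A]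
  by (rule eq_vecI, insert pm_carrier[OF A, of p], auto)

lemma ev_zero_poly[simp]: "v \<in> carrier_vec n \<Longrightarrow> ev A 0 v = 0\<^sub>v n"
  unfolding ev_def using A by auto

lemma ev_zero_vec[simp]: "ev A q (0\<^sub>v n) = 0\<^sub>v n"
  unfolding ev_def using pm_carrier[OF A, of q] by auto

lemma ev_add_vec: "v \<in> carrier_vec n \<Longrightarrow> w \<in> carrier_vec n \<Longrightarrow> ev A q (v + w) = ev A q v + ev A q w"
  unfolding ev_def by (rule mult_add_distrib_mat_vec, insert pm_carrier[OF A, of q], auto)

lemma ev_uminus_vec: "v \<in> carrier_vec n \<Longrightarrow> ev A q (- v) = - ev A q v"
  unfolding ev_def by (rule eq_vecI, insert pm_carrier[OF A, of q], auto)

lemma pm_const: "poly_mat [:c:] A = c \<cdot>\<^sub>m 1\<^sub>m n"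
  unfolding pm_pCons[OF A] using A by (intro eq_matI, auto)

lemma pm_one: "poly_mat 1 A = 1\<^sub>m n"
  using pm_const[of 1] by (simp add: one_pCons, intro eq_matI, auto)

lemma pm_X: "poly_mat [:0,1:] A = A"
  unfolding pm_pCons[OF A] pm_const using A by (intro eq_matI, auto)

lemma ev_one[simp]: "v \<in> carrier_vec n \<Longrightarrow> ev A 1 v = v"
  unfolding ev_def pm_one by auto

lemma ev_X: "ev A [:0,1:] v = A *\<^sub>v v"
  unfolding ev_def pm_X ..

lemma ev_sum: assumes v: "v \<in> carrier_vec n" and fin: "finite S" and i: "i < n"
  shows "ev A (\<Sum>j\<in>S. f j) v $ i = (\<Sum>j\<in>S. ev A (f j) v $ i)"
  using fin
proof (induction S rule: finite_induct)
  case empty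
  then show ?case using v i by simp
next
  case (insert x F)
  then show ?case using v i by (simp add: ev_add)
qed

lemma pm_minus_eq: assumes "poly_mat p A = poly_mat q A"
  shows "poly_mat (p - q) A = 0\<^sub>m n n"
proof -
  have "poly_mat (p - q) A = poly_mat (p + Polynomial.smult (-1) q) A" by simp
  also have "\<dots> = poly_mat p A + (-1) \<cdot>\<^sub>m poly_mat p A"
    unfolding pm_add[OF A] pm_smult[OF A] assms ..
  also have "\<dots> = 0\<^sub>m n n"
    by (rule eq_matI, insert pm_carrier[OF A, of p], auto)
  finally show ?thesis .
qed

lemma mat_zero_by_cols: assumes M: "(M :: 'a mat) \<in> carrier_mat n n"
  and c: "\<And>j. j < n \<Longrightarrow> M *\<^sub>v unit_vec n j = 0\<^sub>v n"
  shows "M = 0\<^sub>m n n"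
proof (rule eq_matI)
  fix i j assume ij: "i < dim_row (0\<^sub>m n n)" "j < dim_col (0\<^sub>m n n)"
  have ij': "i < n" "j < n" using ij by auto
  have "(M *\<^sub>v unit_vec n j) $ i = row M i \<bullet> unit_vec n j" using ij' M by simp
  also have "\<dots> = row M i $ j" using ij' by simp
  also have "\<dots> = M $$ (i, j)" using ij' M by simp
  finally have "(M *\<^sub>v unit_vec n j) $ i = M $$ (i, j)" .
  then show "M $$ (i, j) = 0\<^sub>m n n $$ (i, j)" using c[of j] ij by auto
qed (insert M, auto)

end

lemma finite_carrier_mat_finite: "finite (carrier_mat n m :: 'a :: finite mat set)"
proof -
  let ?f = "\<lambda>A :: 'a mat. (\<lambda>i\<in>{..<n}. \<lambda>j\<in>{..<m}. A $$ (i,j))"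
  have "inj_on ?f (carrier_mat n m)"
  proof
    fix A B :: "'a mat" assume A: "A \<in> carrier_mat n m" and B: "B \<in> carrier_mat n m"
      and eq: "?f A = ?f B"
    show "A = B"
    proof (rule eq_matI)
      fix i j assume "i < dim_row B" "j < dim_col B"
      with B have ij: "i < n" "j < m" by auto
      have "?f A i j = ?f B i j" using eq by simp
      with ij show "A $$ (i, j) = B $$ (i, j)" by simp
    qed (insert A B, auto)
  qed
  moreover have "?f ` carrier_mat n m \<subseteq> PiE {..<n} (\<lambda>_. PiE {..<m} (\<lambda>_. UNIV))"
  proof
    fix x assume "x \<in> ?f ` carrier_mat n m"
    then obtain A :: "'a mat" where x: "x = ?f A" by auto
    show "x \<in> PiE {..<n} (\<lambda>_. PiE {..<m} (\<lambda>_. UNIV))"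
      unfolding x restrict_PiE_iff by simp
  qed
  moreover have "finite (PiE {..<n} (\<lambda>_. PiE {..<m} (\<lambda>_. (UNIV :: 'a set))))"
    by (intro finite_PiE, auto)
  ultimately show ?thesis by (rule inj_on_finite)
qed

lemma exists_annihilator: assumes A: "(A :: 'a :: {field,finite} mat) \<in> carrier_mat n n"
  shows "\<exists>q. q \<noteq> 0 \<and> poly_mat q A = 0\<^sub>m n n"
proof -
  let ?g = "\<lambda>j. poly_mat (Polynomial.monom 1 j) A"
  have "range ?g \<subseteq> carrier_mat n n" using pm_carrier[OF A] by auto
  hence fin: "finite (range ?g)" using finite_carrier_mat_finite finite_subset by blast
  have "\<not> inj ?g"
  proof
    assume "inj ?g"
    hence "infinite (range ?g)" using finite_imageD by blast
    with fin show False by simp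
  qed
  then obtain i j where ij: "i \<noteq> j" "?g i = ?g j" unfolding inj_def by auto
  let ?q = "Polynomial.monom (1::'a) i - Polynomial.monom 1 j"
  have "Polynomial.coeff ?q i = 1" using ij(1) by (simp add: Polynomial.coeff_monom)
  hence "?q \<noteq> 0" by (metis one_neq_zero Polynomial.coeff_0)
  moreover have "poly_mat ?q A = 0\<^sub>m n n" using pm_minus_eq[OF A ij(2)] .
  ultimately show ?thesis by blast
qed

lemma zero_mat_mult_vec: "v \<in> carrier_vec n \<Longrightarrow> 0\<^sub>m n n *\<^sub>v v = (0\<^sub>v n :: 'a :: semiring_0 vec)"
  by (rule eq_vecI, auto)

lemma vec_sum_zero_imp: assumes "a \<in> carrier_vec n" "b \<in> carrier_vec n" "a + b = (0\<^sub>v n :: 'a :: ab_group_add vec)"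
  shows "a = - b"
proof (rule eq_vecI)
  fix i assume "i < dim_vec (- b)"
  hence i: "i < n" using assms by auto
  have "(a + b) $ i = 0" using assms(3) i by simp
  hence "a $ i + b $ i = 0" using assms(1,2) i by (simp add: carrier_vecD)
  thus "a $ i = (- b) $ i" using assms i by (simp add: eq_neg_iff_add_eq_0)
qed (insert assms, auto)

lemma nonderog_degree:
  fixes B :: "F2 mat"
  assumes B: "B \<in> carrier_mat n n" and nd: "non_derogatory B"
  shows "\<And>q. q \<noteq> 0 \<Longrightarrow> poly_mat q B = 0\<^sub>m n n \<Longrightarrow> n \<le> degree q"
proof -
  have dB: "dim_row B = n" using B by auto
  obtain q0 where q0: "q0 \<noteq> 0" "poly_mat q0 B = 0\<^sub>m n n" using exists_annihilator[OF B] by auto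
  define d where "d = (LEAST d. \<exists>q. q \<noteq> 0 \<and> poly_mat q B = 0\<^sub>m n n \<and> degree q = d)"
  have "\<exists>q. q \<noteq> 0 \<and> poly_mat q B = 0\<^sub>m n n \<and> degree q = d"
    unfolding d_def by (rule LeastI_ex, use q0 in blast)
  then obtain m where m: "m \<noteq> 0" "poly_mat m B = 0\<^sub>m n n" "degree m = d" by blast
  have mind: "\<And>q. q \<noteq> 0 \<Longrightarrow> poly_mat q B = 0\<^sub>m n n \<Longrightarrow> d \<le> degree q"
    unfolding d_def by (rule Least_le, blast)
  have lm: "lead_coeff m = 1" using F2_cases[of "lead_coeff m"] m(1) by auto
  let ?P = "\<lambda>p. monic p \<and> poly_mat p B = 0\<^sub>m (dim_row B) (dim_row B) \<and>
      (\<forall>q. q \<noteq> 0 \<longrightarrow> poly_mat q B = 0\<^sub>m (dim_row B) (dim_row B) \<longrightarrow> degree p \<le> degree q)"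
  have Pm: "?P m" unfolding dB using lm m mind by auto
  have uniq: "p = m" if Pp: "?P p" for p
  proof -
    have p0: "p \<noteq> 0" using Pp by auto
    have "degree p \<le> degree m" using Pp m unfolding dB by auto
    moreover have "d \<le> degree p" using mind[OF p0] Pp unfolding dB by auto
    ultimately have dp: "degree p = d" using m(3) by auto
    have r: "poly_mat (p - m) B = 0\<^sub>m n n" using pm_minus_eq[OF B] Pp m(2) unfolding dB by auto
    show ?thesis
    proof (rule ccontr)
      assume "p \<noteq> m"
      hence r0: "p - m \<noteq> 0" by auto
      have "d \<le> degree (p - m)" using mind[OF r0 r] .
      moreover have "degree (p - m) \<le> d" using degree_diff_le_max[of p m] dp m(3) by auto
      ultimately have "degree (p - m) = d" by auto
      hence "lead_coeff (p - m) = 0" using Pp lm dp m(3) by simp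
      with r0 show False by (metis leading_coeff_0_iff)
    qed
  qed
  have "minimal_poly B = m" unfolding minimal_poly_def by (rule the_equality, rule Pm, rule uniq)
  with nd have "m = char_poly B" unfolding non_derogatory_def by simp
  hence "degree m = n" using degree_monic_char_poly[OF B] by simp
  thus "\<And>q. q \<noteq> 0 \<Longrightarrow> poly_mat q B = 0\<^sub>m n n \<Longrightarrow> n \<le> degree q" using mind m(3) by auto
qed

lemma cyclic_vector:
  fixes B :: "F2 mat"
  assumes B: "B \<in> carrier_mat n n"
    and H: "\<And>q. q \<noteq> 0 \<Longrightarrow> poly_mat q B = 0\<^sub>m n n \<Longrightarrow> n \<le> degree q"
  shows "\<exists>v \<in> carrier_vec n. \<forall>q. q \<noteq> 0 \<longrightarrow> ev B q v = 0\<^sub>v n \<longrightarrow> n \<le> degree q"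
proof -
  note evc = ev_carrier[OF B]
  note [simp] = ev_zero_vec[OF B] ev_carrier[OF B] ev_dim[OF B]
  obtain m0 where m0: "m0 \<noteq> 0" "poly_mat m0 B = 0\<^sub>m n n" using exists_annihilator[OF B] by auto
  have ann0: "ev B m0 v = 0\<^sub>v n" if "v \<in> carrier_vec n" for v
    unfolding ev_def m0(2) using zero_mat_mult_vec[OF that] .
  define dv where "dv v = (LEAST d. \<exists>q. q \<noteq> 0 \<and> ev B q v = 0\<^sub>v n \<and> degree q = d)" for v
  have dv_ex: "\<exists>q. q \<noteq> 0 \<and> ev B q v = 0\<^sub>v n \<and> degree q = dv v" if "v \<in> carrier_vec n" for v
    unfolding dv_def by (rule LeastI_ex, use ann0[OF that] m0 in blast)
  have dv_le: "dv v \<le> degree q" if "q \<noteq> 0" "ev B q v = 0\<^sub>v n" for v q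
    unfolding dv_def by (rule Least_le, use that in blast)
  have mindvd: "q0 dvd q" if v: "v \<in> carrier_vec n" and q0: "q0 \<noteq> 0" "ev B q0 v = 0\<^sub>v n"
    "degree q0 = dv v" and q: "ev B q v = 0\<^sub>v n" for v q0 q
  proof -
    let ?r = "q mod q0"
    have "q = (q div q0) * q0 + ?r" by simp
    hence "ev B q v = ev B ((q div q0) * q0) v + ev B ?r v" using ev_add[OF B v] by metis
    also have "ev B ((q div q0) * q0) v = 0\<^sub>v n" unfolding ev_mult[OF B v] q0(2) by simp
    finally have eq: "ev B q v = 0\<^sub>v n + ev B ?r v" .
    have "ev B ?r v = 0\<^sub>v n + ev B ?r v" using left_zero_vec[OF evc[of ?r v]] by simp
    also have "\<dots> = 0\<^sub>v n" using eq q by metis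
    finally have r: "ev B ?r v = 0\<^sub>v n" .
    show ?thesis
    proof (rule ccontr)
      assume "\<not> q0 dvd q"
      hence r0: "?r \<noteq> 0" by (simp add: dvd_eq_mod_eq_0)
      have "degree ?r < degree q0" using degree_mod_less'[OF q0(1) r0] .
      moreover have "dv v \<le> degree ?r" using dv_le[OF r0 r] .
      ultimately show False using q0(3) by simp
    qed
  qed
  have bound: "dv v \<le> degree m0" if "v \<in> carrier_vec n" for v using dv_le[OF m0(1) ann0[OF that]] .
  have fin: "finite (dv ` carrier_vec n)"
    by (rule finite_subset[of _ "{..degree m0}"], use bound in auto)
  have ne: "dv ` carrier_vec n \<noteq> {}" using zero_carrier_vec[of n] by blast
  obtain v where v: "v \<in> carrier_vec n" "dv v = Max (dv ` carrier_vec n)"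
    using Max_in[OF fin ne] by auto
  have vmax: "dv w \<le> dv v" if "w \<in> carrier_vec n" for w
    unfolding v(2) by (rule Max_ge[OF fin], use that in auto)
  obtain mv where mv: "mv \<noteq> 0" "ev B mv v = 0\<^sub>v n" "degree mv = dv v" using dv_ex[OF v(1)] by auto
  have key: "poly_mat mv B = 0\<^sub>m n n"
  proof (rule ccontr)
    assume nz: "poly_mat mv B \<noteq> 0\<^sub>m n n"
    obtain j where j: "j < n" "ev B mv (unit_vec n j) \<noteq> 0\<^sub>v n"
      using mat_zero_by_cols[OF B pm_carrier[OF B]] nz unfolding ev_def by blast
    define w where "w = (unit_vec n j :: F2 vec)"
    have w: "w \<in> carrier_vec n" unfolding w_def by simp
    obtain mw where mw: "mw \<noteq> 0" "ev B mw w = 0\<^sub>v n" "degree mw = dv w" using dv_ex[OF w] by auto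
    have ndvd: "\<not> mw dvd mv"
    proof
      assume "mw dvd mv"
      then obtain t where "mv = mw * t" unfolding dvd_def by blast
      hence "mv = t * mw" by (simp add: ac_simps)
      hence "ev B mv w = ev B t (ev B mw w)" using ev_mult[OF B w] by simp
      hence "ev B mv w = 0\<^sub>v n" unfolding mw(2) by simp
      with j(2) show False unfolding w_def by simp
    qed
    obtain p where p: "prime p" "multiplicity p mv < multiplicity p mw"
      using multiplicity_le_imp_dvd[OF mw(1), of mv] ndvd by (meson not_le)
    define e where "e = multiplicity p mw"
    define f where "f = multiplicity p mv"
    have fe: "f < e" using p(2) unfolding e_def f_def .
    have p0: "p \<noteq> 0" using p(1) by auto
    have nu: "\<not> is_unit p" using p(1) not_prime_unit by blast
    have degp: "degree p \<ge> 1"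
    proof -
      have "\<not> is_unit p" using p(1) not_prime_unit by blast
      hence "degree p \<noteq> 0" using is_unit_iff_degree[OF p0] by blast
      thus ?thesis by simp
    qed
    obtain r where r: "mw = p ^ e * r" using multiplicity_dvd[of p mw] unfolding e_def unfolding dvd_def by blast
    obtain m' where m': "mv = p ^ f * m'" "\<not> p dvd m'"
      using multiplicity_decompose'[OF mv(1) nu] unfolding f_def by metis
    have r0: "r \<noteq> 0" using mw(1) r by auto
    have m'0: "m' \<noteq> 0" using mv(1) m'(1) by auto
    have cop: "coprime m' (p ^ e)"
      using prime_imp_coprime[OF p(1) m'(2)] by (simp add: coprime_commute)
    define w' where "w' = ev B r w"
    define v' where "v' = ev B (p ^ f) v"
    define z where "z = v' + w'"
    have w'c: "w' \<in> carrier_vec n" and v'c: "v' \<in> carrier_vec n" unfolding w'_def v'_def by auto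
    have zc: "z \<in> carrier_vec n" unfolding z_def using w'c v'c by auto
    have A1: "ev B (p ^ e) w' = 0\<^sub>v n"
      unfolding w'_def ev_mult[OF B w, symmetric] r[symmetric] by (rule mw(2))
    have A2: "p ^ e dvd s" if "ev B s w' = 0\<^sub>v n" for s
    proof -
      have "ev B (s * r) w = 0\<^sub>v n" unfolding ev_mult[OF B w] using that unfolding w'_def .
      hence "mw dvd s * r" using mindvd[OF w mw] by blast
      hence "p ^ e * r dvd s * r" using r by simp
      thus ?thesis using r0 by simp
    qed
    have A3: "m' dvd s" if "ev B s v' = 0\<^sub>v n" for s
    proof -
      have "ev B (s * p ^ f) v = 0\<^sub>v n" unfolding ev_mult[OF B v(1)] using that unfolding v'_def .
      hence "mv dvd s * p ^ f" using mindvd[OF v(1) mv] by blast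
      hence "m' * p ^ f dvd s * p ^ f" using m'(1) by (simp add: ac_simps)
      thus ?thesis using p0 by simp
    qed
    have A4: "ev B m' v' = 0\<^sub>v n"
      unfolding v'_def ev_mult[OF B v(1), symmetric] using mv(2) m'(1) by (simp add: ac_simps)
    have zbound: "degree m' + e * degree p \<le> degree q" if q0: "q \<noteq> 0" and qz: "ev B q z = 0\<^sub>v n" for q
    proof -
      have "ev B q v' + ev B q w' = 0\<^sub>v n" using qz unfolding z_def ev_add_vec[OF B v'c w'c] .
      hence eqv: "ev B q v' = - ev B q w'" using vec_sum_zero_imp evc by blast
      have "ev B (p ^ e * q) v' = ev B (p ^ e) (- ev B q w')" unfolding ev_mult[OF B v'c] eqv ..
      also have "\<dots> = - ev B (p ^ e) (ev B q w')" using ev_uminus_vec[OF B evc] .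
      also have "ev B (p ^ e) (ev B q w') = ev B (q * p ^ e) w'"
        unfolding ev_mult[OF B w'c] by (simp add: ac_simps ev_mult[OF B w'c, symmetric])
      also have "\<dots> = 0\<^sub>v n" unfolding ev_mult[OF B w'c] A1 by simp
      finally have "ev B (p ^ e * q) v' = 0\<^sub>v n" by simp
      hence "m' dvd p ^ e * q" by (rule A3)
      hence dq: "m' dvd q" using cop by (simp add: coprime_dvd_mult_right_iff)
      then obtain t where "q = m' * t" unfolding dvd_def by blast
      hence "q = t * m'" by (simp add: ac_simps)
      hence "ev B q v' = ev B t (ev B m' v')" using ev_mult[OF B v'c] by simp
      hence "ev B q v' = 0\<^sub>v n" unfolding A4 by simp
      hence "ev B q w' = 0\<^sub>v n" using eqv evc[of q w'] by (metis uminus_zero_vec_eq)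
      hence "p ^ e dvd q" by (rule A2)
      hence "m' * p ^ e dvd q" using dq cop by (simp add: divides_mult)
      hence "degree (m' * p ^ e) \<le> degree q" using q0 by (rule dvd_imp_degree_le)
      thus ?thesis using m'0 p0 by (simp add: degree_mult_eq degree_power_eq mult.commute)
    qed
    have dmv: "degree mv = degree m' + f * degree p"
      unfolding m'(1) using m'0 p0 by (simp add: degree_mult_eq degree_power_eq)
    obtain qz where qz: "qz \<noteq> 0" "ev B qz z = 0\<^sub>v n" "degree qz = dv z" using dv_ex[OF zc] by auto
    have "degree m' + e * degree p \<le> dv z" using zbound[OF qz(1,2)] qz(3) by simp
    moreover have "f * degree p < e * degree p" using fe degp by simp
    ultimately have "dv v < dv z" using dmv mv(3) by linarith
    with vmax[OF zc] show False by simp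
  qed
  have nmv: "n \<le> degree mv" using H[OF mv(1) key] .
  show ?thesis
  proof (intro bexI[OF _ v(1)] allI impI)
    fix q assume "q \<noteq> 0" "ev B q v = 0\<^sub>v n"
    from dv_le[OF this] nmv mv(3) show "n \<le> degree q" by simp
  qed
qed

lemma mult_unit_col: "j < m \<Longrightarrow> (M::'a::field mat) \<in> carrier_mat n m \<Longrightarrow> M *\<^sub>v unit_vec m j = col M j"
  by (rule eq_vecI, auto)

lemma X_mult_monom: "[:0, 1:] * Polynomial.monom (1::'a::comm_ring_1) i = Polynomial.monom 1 (Suc i)"
  by (simp add: Polynomial.monom_Suc)

lemma krylov_similar:
  fixes B :: "F2 mat"
  assumes B: "B \<in> carrier_mat n n" and v: "v \<in> carrier_vec n"
    and cyc: "\<forall>q. q \<noteq> 0 \<longrightarrow> ev B q v = 0\<^sub>v n \<longrightarrow> n \<le> degree q"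
  shows "\<exists>P Q. P \<in> carrier_mat n n \<and> Q \<in> carrier_mat n n \<and> P * Q = 1\<^sub>m n \<and> Q * P = 1\<^sub>m n \<and>
     (\<forall>i r. i < n - 1 \<longrightarrow> r < n \<longrightarrow> (Q * B * P) $$ (r, i) = (if r = Suc i then 1 else 0))"
proof -
  note [simp] = ev_zero_vec[OF B] ev_carrier[OF B] ev_dim[OF B]
  define kv where "kv j = ev B (Polynomial.monom 1 j) v" for j
  define P where "P = mat n n (\<lambda>(i,j). kv j $ i)"
  have P: "P \<in> carrier_mat n n" unfolding P_def by simp
  have colP: "P *\<^sub>v unit_vec n j = kv j" if "j < n" for j
    unfolding mult_unit_col[OF that P] using that unfolding P_def kv_def
    by (intro eq_vecI, auto)
  have detP: "det P \<noteq> 0"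
  proof
    assume "det P = 0"
    then obtain x where x: "x \<in> carrier_vec n" "x \<noteq> 0\<^sub>v n" "P *\<^sub>v x = 0\<^sub>v n"
      using det_0_iff_vec_prod_zero_field[OF P] by auto
    define q where "q = (\<Sum>j<n. Polynomial.monom (x $ j) j)"
    have coeffq: "Polynomial.coeff q i = (if i < n then x $ i else 0)" for i
      unfolding q_def by (simp add: Polynomial.coeff_sum Polynomial.coeff_monom)
    have "ev B q v = P *\<^sub>v x"
    proof (rule eq_vecI)
      fix i assume "i < dim_vec (P *\<^sub>v x)"
      hence i: "i < n" using P by simp
      have "ev B q v $ i = (\<Sum>j<n. ev B (Polynomial.monom (x $ j) j) v $ i)"
        unfolding q_def by (rule ev_sum[OF B v _ i], simp)
      also have "\<dots> = (\<Sum>j<n. x $ j * kv j $ i)"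
      proof (rule sum.cong[OF refl])
        fix j
        have "Polynomial.monom (x $ j) j = Polynomial.smult (x $ j) (Polynomial.monom 1 j)"
          by (simp add: Polynomial.smult_monom)
        thus "ev B (Polynomial.monom (x $ j) j) v $ i = x $ j * kv j $ i"
          unfolding kv_def using ev_smult[OF B v] i by simp
      qed
      also have "\<dots> = (P *\<^sub>v x) $ i"
        using i P x(1) unfolding P_def by (auto simp: scalar_prod_def lessThan_atLeast0 intro: sum.cong)
      finally show "ev B q v $ i = (P *\<^sub>v x) $ i" .
    qed (insert P, auto)
    hence evq: "ev B q v = 0\<^sub>v n" using x(3) by simp
    obtain j where j: "j < n" "x $ j \<noteq> 0" using x(1,2) by (metis eq_vecI carrier_vecD index_zero_vec(1,2))
    have q0: "q \<noteq> 0" using coeffq[of j] j by auto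
    have "degree q \<le> n - 1" by (rule degree_le, use coeffq in auto)
    hence "degree q < n" using j by linarith
    with cyc q0 evq show False by auto
  qed
  from det_non_zero_imp_unit[OF P detP, of "()"]
  obtain Q where Q: "Q \<in> carrier_mat n n" "Q * P = 1\<^sub>m n" "P * Q = 1\<^sub>m n"
    unfolding Units_def by (auto simp: ring_mat_simps)
  have C: "(Q * B * P) $$ (r, i) = (if r = Suc i then 1 else 0)" if i: "i < n - 1" and r: "r < n" for i r
  proof -
    have i': "i < n" "Suc i < n" using i by auto
    have "(Q * B * P) *\<^sub>v unit_vec n i = (Q * B) *\<^sub>v (P *\<^sub>v unit_vec n i)"
      by (rule assoc_mult_mat_vec[of _ n n _ n], use Q B P in auto)
    also have "\<dots> = Q *\<^sub>v (B *\<^sub>v (P *\<^sub>v unit_vec n i))"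
      by (rule assoc_mult_mat_vec[of _ n n _ n], use Q B P in auto)
    also have "P *\<^sub>v unit_vec n i = kv i" using colP[OF i'(1)] .
    also have "B *\<^sub>v kv i = kv (Suc i)"
      unfolding kv_def ev_X[OF B, symmetric] ev_mult[OF B v, symmetric] X_mult_monom ..
    also have "kv (Suc i) = P *\<^sub>v unit_vec n (Suc i)" using colP[OF i'(2)] by simp
    also have "Q *\<^sub>v (P *\<^sub>v unit_vec n (Suc i)) = unit_vec n (Suc i)"
      using Q P by (simp flip: assoc_mult_mat_vec)
    finally have eq: "(Q * B * P) *\<^sub>v unit_vec n i = unit_vec n (Suc i)" .
    have QBP: "Q * B * P \<in> carrier_mat n n" using Q B P by auto
    have "(Q * B * P) $$ (r, i) = ((Q * B * P) *\<^sub>v unit_vec n i) $ r"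
      unfolding mult_unit_col[OF i'(1) QBP] using r i' carrier_matD[OF QBP] by simp
    thus ?thesis unfolding eq using r by (simp add: unit_vec_def)
  qed
  show ?thesis using P Q C by blast
qed

lemma conj_mult: assumes P: "(P :: 'a :: comm_ring_1 mat) \<in> carrier_mat n n" and Q: "Q \<in> carrier_mat n n"
  and X: "X \<in> carrier_mat n n" and Y: "Y \<in> carrier_mat n n" and QP: "Q * P = 1\<^sub>m n"
  shows "(P * X * Q) * (P * Y * Q) = P * (X * Y) * Q"
proof -
  have PX: "P * X \<in> carrier_mat n n" and PY: "P * Y \<in> carrier_mat n n" and YQ: "Y * Q \<in> carrier_mat n n"
    and PYQ: "P * Y * Q \<in> carrier_mat n n" using P Q X Y by auto
  have "(P * X * Q) * (P * Y * Q) = (P * X) * (Q * (P * Y * Q))" by (rule assoc_mult_mat[OF PX Q PYQ])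
  also have "Q * (P * Y * Q) = Q * (P * Y) * Q" by (rule assoc_mult_mat[OF Q PY Q, symmetric])
  also have "Q * (P * Y) = Q * P * Y" by (rule assoc_mult_mat[OF Q P Y, symmetric])
  also have "Q * P * Y = Y" using QP left_mult_one_mat[OF Y] by simp
  also have "(P * X) * (Y * Q) = P * X * Y * Q" by (rule assoc_mult_mat[OF PX Y Q, symmetric])
  also have "P * X * Y = P * (X * Y)" by (rule assoc_mult_mat[OF P X Y])
  finally show ?thesis .
qed

lemma transfer_conj:
  fixes B :: "F2 mat"
  assumes B: "B \<in> carrier_mat n n" and P: "P \<in> carrier_mat n n" and Q: "Q \<in> carrier_mat n n"
    and PQ: "P * Q = 1\<^sub>m n" and QP: "Q * P = 1\<^sub>m n"
    and N0: "N0 \<in> carrier_mat n n" and D0: "D0 \<in> carrier_mat n n"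
    and dec: "Q * B * P = N0 + D0" and sq: "N0 * N0 = 0\<^sub>m n n" and pot: "D0 ^\<^sub>m 4 = D0"
  shows "\<exists>N D. N \<in> carrier_mat n n \<and> D \<in> carrier_mat n n \<and>
           B = N + D \<and> N ^\<^sub>m 2 = 0\<^sub>m n n \<and> D ^\<^sub>m 4 = D"
proof (intro exI conjI)
  show "P * N0 * Q \<in> carrier_mat n n" "P * D0 * Q \<in> carrier_mat n n" using P Q N0 D0 by auto
  have "B = (P * Q) * B * (P * Q)" using B PQ by simp
  also have "\<dots> = P * (Q * B * P) * Q" using P Q B by (simp add: assoc_mult_mat[of _ n n _ n _ n])
  also have "\<dots> = P * N0 * Q + P * D0 * Q" unfolding dec using P Q N0 D0
    by (simp add: mult_add_distrib_mat[of _ n n] add_mult_distrib_mat[of _ n n])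
  finally show "B = P * N0 * Q + P * D0 * Q" .
  have pow2: "A ^\<^sub>m 2 = A * A" if "A \<in> carrier_mat n n" for A :: "F2 mat"
    using that by (simp add: numeral_2_eq_2)
  have pow4: "A ^\<^sub>m 4 = A * A * A * A" if "A \<in> carrier_mat n n" for A :: "F2 mat"
    using that by (simp add: numeral_eq_Suc)
  have cN: "P * N0 * Q \<in> carrier_mat n n" and cD: "P * D0 * Q \<in> carrier_mat n n" using P Q N0 D0 by auto
  have "(P * N0 * Q) ^\<^sub>m 2 = P * (N0 * N0) * Q" unfolding pow2[OF cN] conj_mult[OF P Q N0 N0 QP] ..
  thus "(P * N0 * Q) ^\<^sub>m 2 = 0\<^sub>m n n" using sq P Q by simp
  have DD: "D0 * D0 \<in> carrier_mat n n" "D0 * D0 * D0 \<in> carrier_mat n n" using D0 by auto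
  have "(P * D0 * Q) ^\<^sub>m 4 = P * (D0 * D0 * D0 * D0) * Q"
    unfolding pow4[OF cD] conj_mult[OF P Q D0 D0 QP] conj_mult[OF P Q DD(1) D0 QP] conj_mult[OF P Q DD(2) D0 QP] ..
  also have "D0 * D0 * D0 * D0 = D0" using pot pow4[OF D0] by simp
  finally show "(P * D0 * Q) ^\<^sub>m 4 = P * D0 * Q" .
qed

lemma sum_two: assumes "finite S" "a \<noteq> b" "\<And>l. l \<in> S \<Longrightarrow> l \<noteq> a \<Longrightarrow> l \<noteq> b \<Longrightarrow> f l = 0"
  shows "sum f S = (if a \<in> S then f a else 0) + (if b \<in> S then f b else (0 :: 'a :: comm_monoid_add))"
proof -
  have "sum f S = sum f (S \<inter> {a, b})"
    by (rule sum.mono_neutral_right, insert assms, auto)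
  also have "\<dots> = (if a \<in> S then f a else 0) + (if b \<in> S then f b else 0)"
    using assms(2) by (cases "a \<in> S"; cases "b \<in> S", auto simp: Int_insert_right)
  finally show ?thesis .
qed

definition Dmat :: "nat \<Rightarrow> (nat \<Rightarrow> nat) \<Rightarrow> (nat \<Rightarrow> F2) \<Rightarrow> F2 mat" where
  "Dmat n \<sigma> L = mat n n (\<lambda>(i,j). if j = n - 1 then L i else if \<sigma> j = i then 1 else 0)"

lemma Dmat_carrier[simp]: "Dmat n \<sigma> L \<in> carrier_mat n n"
  unfolding Dmat_def by simp

lemma Dmat_dims[simp]: "dim_row (Dmat n \<sigma> L) = n" "dim_col (Dmat n \<sigma> L) = n"
  unfolding Dmat_def by auto

lemma Dmat_col: assumes j: "j < n"
  shows "Dmat n \<sigma> L *\<^sub>v unit_vec n j =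
    (if j = n - 1 then vec n L else if \<sigma> j < n then unit_vec n (\<sigma> j) else 0\<^sub>v n)"
  unfolding mult_unit_col[OF j Dmat_carrier]
  by (rule eq_vecI, insert j, auto simp: Dmat_def unit_vec_def)

lemma Dmat_mult:
  assumes shape: "\<And>l. l < n - 1 \<Longrightarrow> \<sigma> l = Suc l \<or> \<sigma> l + 2 = l \<or> n \<le> \<sigma> l"
    and x: "x \<in> carrier_vec n" and i: "i < n" and n2: "2 \<le> n"
  shows "(Dmat n \<sigma> L *\<^sub>v x) $ i = (if \<sigma> (i - 1) = i then x $ (i - 1) else 0)
     + (if i + 2 < n - 1 \<and> \<sigma> (i + 2) = i then x $ (i + 2) else 0) + L i * x $ (n - 1)"
proof -
  let ?f = "\<lambda>l. (if \<sigma> l = i then x $ l else 0)"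
  have "(Dmat n \<sigma> L *\<^sub>v x) $ i = (\<Sum>l\<in>{0..<n}. Dmat n \<sigma> L $$ (i, l) * x $ l)"
    using i x by (simp add: scalar_prod_def Dmat_def)
  also have "{0..<n} = insert (n - 1) {0..<n - 1}" using n2 by auto
  also have "(\<Sum>l\<in>insert (n - 1) {0..<n - 1}. Dmat n \<sigma> L $$ (i, l) * x $ l)
      = L i * x $ (n - 1) + (\<Sum>l\<in>{0..<n - 1}. ?f l)"
    using i n2 by (subst sum.insert, auto simp: Dmat_def intro!: sum.cong)
  also have "(\<Sum>l\<in>{0..<n - 1}. ?f l) = (if i - 1 \<in> {0..<n-1} then ?f (i - 1) else 0)
       + (if i + 2 \<in> {0..<n-1} then ?f (i + 2) else 0)"
  proof (rule sum_two)
    fix l assume l: "l \<in> {0..<n - 1}" "l \<noteq> i - 1" "l \<noteq> i + 2"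
    show "?f l = 0" using shape[of l] l i by auto
  qed auto
  finally show ?thesis using i n2 by auto
qed

lemma sqzero_support: assumes N: "(N :: F2 mat) \<in> carrier_mat n n"
  and supp: "\<And>i j. i < n \<Longrightarrow> j < n \<Longrightarrow> N $$ (i, j) \<noteq> 0 \<Longrightarrow> i \<notin> J \<and> j \<in> J"
  shows "N * N = 0\<^sub>m n n"
proof (rule eq_matI)
  fix i j assume ij: "i < dim_row (0\<^sub>m n n)" "j < dim_col (0\<^sub>m n n)"
  hence ij': "i < n" "j < n" by auto
  have "(N * N) $$ (i, j) = (\<Sum>l\<in>{0..<n}. N $$ (i, l) * N $$ (l, j))"
    using ij' N by (simp add: scalar_prod_def)
  also have "\<dots> = 0"
  proof (rule sum.neutral, intro ballI)
    fix l assume l: "l \<in> {0..<n}"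
    show "N $$ (i, l) * N $$ (l, j) = 0"
    proof (cases "N $$ (i, l) = 0")
      case False
      hence "l \<in> J" using supp[of i l] ij' l by auto
      hence "N $$ (l, j) = 0" using supp[of l j] ij' l by auto
      thus ?thesis by simp
    qed simp
  qed
  finally show "(N * N) $$ (i, j) = 0\<^sub>m n n $$ (i, j)" using ij' by simp
qed (insert N, auto)

lemma potent_cols: assumes D: "(D :: F2 mat) \<in> carrier_mat n n"
  and c: "\<And>j. j < n \<Longrightarrow> D *\<^sub>v (D *\<^sub>v (D *\<^sub>v (D *\<^sub>v unit_vec n j))) = D *\<^sub>v unit_vec n j"
  shows "D ^\<^sub>m 4 = D"
proof -
  have D4: "D ^\<^sub>m 4 = D * D * D * D" using D by (simp add: numeral_eq_Suc)
  have c4: "D * D * D * D \<in> carrier_mat n n" using mult_carrier_mat[OF mult_carrier_mat[OF mult_carrier_mat[OF D D] D] D] .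
  show ?thesis
  proof (rule eq_matI)
    fix i j assume ij: "i < dim_row D" "j < dim_col D"
    hence ij': "i < n" "j < n" using D by auto
    have DD: "D * D \<in> carrier_mat n n" using mult_carrier_mat[OF D D] .
    have DDD: "D * D * D \<in> carrier_mat n n" using mult_carrier_mat[OF DD D] .
    have e: "unit_vec n j \<in> carrier_vec n" by simp
    have "(D * D * D * D) *\<^sub>v unit_vec n j = (D * D * D) *\<^sub>v (D *\<^sub>v unit_vec n j)"
      by (rule assoc_mult_mat_vec[OF DDD D e])
    also have "\<dots> = (D * D) *\<^sub>v (D *\<^sub>v (D *\<^sub>v unit_vec n j))"
      by (rule assoc_mult_mat_vec[OF DD D], use D in simp)
    also have "\<dots> = D *\<^sub>v (D *\<^sub>v (D *\<^sub>v (D *\<^sub>v unit_vec n j)))"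
      by (rule assoc_mult_mat_vec[OF D D], use D in simp)
    finally have "(D * D * D * D) *\<^sub>v unit_vec n j = D *\<^sub>v (D *\<^sub>v (D *\<^sub>v (D *\<^sub>v unit_vec n j)))" .
    also have "\<dots> = D *\<^sub>v unit_vec n j" using c[OF ij'(2)] .
    finally have eq: "col (D * D * D * D) j = col D j"
      unfolding mult_unit_col[OF ij'(2) c4] mult_unit_col[OF ij'(2) D] .
    have "(D * D * D * D) $$ (i, j) = col (D * D * D * D) j $ i" using ij' carrier_matD[OF c4] by simp
    also have "\<dots> = col D j $ i" unfolding eq ..
    also have "\<dots> = D $$ (i, j)" using ij' D by simp
    finally show "(D ^\<^sub>m 4) $$ (i, j) = D $$ (i, j)" unfolding D4 .
  qed (insert D, auto simp: D4)
qed

lemma Dmat_sqzero: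
  fixes C :: "F2 mat"
  assumes C: "C \<in> carrier_mat n n"
    and Cs: "\<And>i r. i < n - 1 \<Longrightarrow> r < n \<Longrightarrow> C $$ (r, i) = (if r = Suc i then 1 else 0)"
    and J1: "\<And>j. j < n - 1 \<Longrightarrow> j \<notin> J \<Longrightarrow> \<sigma> j = Suc j"
    and J2: "\<And>j. j < n - 1 \<Longrightarrow> j \<in> J \<Longrightarrow> Suc j \<notin> J \<and> \<sigma> j \<notin> J"
    and J3: "n - 1 \<in> J"
    and J4: "\<And>i. i < n \<Longrightarrow> i \<in> J \<Longrightarrow> L i = C $$ (i, n - 1)"
  shows "(C - Dmat n \<sigma> L) * (C - Dmat n \<sigma> L) = 0\<^sub>m n n"
proof (rule sqzero_support[of _ n J])
  show "C - Dmat n \<sigma> L \<in> carrier_mat n n" by (rule minus_carrier_mat, simp)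
  fix i j assume ij: "i < n" "j < n" and nz: "(C - Dmat n \<sigma> L) $$ (i, j) \<noteq> 0"
  have e: "(C - Dmat n \<sigma> L) $$ (i, j) = C $$ (i, j) - Dmat n \<sigma> L $$ (i, j)" using C ij by simp
  show "i \<notin> J \<and> j \<in> J"
  proof (cases "j = n - 1")
    case True
    thus ?thesis using nz ij J3 J4[of i] unfolding e by (auto simp: Dmat_def)
  next
    case False
    hence j: "j < n - 1" using ij by auto
    have "C $$ (i, j) \<noteq> Dmat n \<sigma> L $$ (i, j)" using nz unfolding e by auto
    hence ne: "(if i = Suc j then 1 else 0) \<noteq> (if \<sigma> j = i then (1::F2) else 0)"
      using Cs[OF j ij(1)] False ij by (simp add: Dmat_def)
    show ?thesis
    proof (cases "j \<in> J")
      case False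
      then show ?thesis using J1[OF j] ne by (auto split: if_splits)
    next
      case True
      then show ?thesis using J2[OF j] ne by (auto split: if_splits)
    qed
  qed
qed

lemma pos0: fixes i k :: nat assumes "i < 4*k" "2 \<le> k"
  shows "i = 0 \<or> (\<exists>q. q + 2 \<le> k \<and> (i = 4*q+1 \<or> i = 4*q+2 \<or> i = 4*q+3 \<or> i = 4*q+4))
     \<or> i = 4*k-3 \<or> i = 4*k-2 \<or> i = 4*k-1"
proof (cases "1 \<le> i \<and> i + 4 \<le> 4 * k")
  case True
  define q where "q = (i - 1) div 4"
  define r where "r = (i - 1) mod 4"
  have i: "i = 4 * q + r + 1" unfolding q_def r_def using True by simp
  have r: "r < 4" unfolding r_def by simp
  have "q + 2 \<le> k" using True i by linarith
  moreover have "i = 4*q+1 \<or> i = 4*q+2 \<or> i = 4*q+3 \<or> i = 4*q+4" using i r by linarith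
  ultimately show ?thesis by blast
next
  case False
  then show ?thesis using assms by linarith
qed

lemma mod4_simps[simp]: "Suc (4*q) mod 4 = 1" "Suc (Suc (4*q)) mod 4 = 2" "Suc (Suc (Suc (4*q))) mod 4 = 3"
  "\<not> 4 dvd Suc (4*q)" "\<not> 4 dvd Suc (Suc (4*q))" "\<not> 4 dvd Suc (Suc (Suc (4*q)))"
  for q :: nat by presburger+

definition sig0 :: "nat \<Rightarrow> nat \<Rightarrow> nat" where
  "sig0 k j = (if j = 0 then 4*k else if j = 4*k - 3 then 4*k - 2 else if j = 4*k - 2 then 4*k - 1
     else if (j - 1) mod 4 = 3 then j - 2 else Suc j)"

definition J0 :: "nat \<Rightarrow> nat set" where
  "J0 k = {j. j = 0 \<or> j = 4*k - 1 \<or> (1 \<le> j \<and> j + 4 \<le> 4*k \<and> (j - 1) mod 4 = 3)}"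

definition L0 :: "nat \<Rightarrow> (nat \<Rightarrow> F2) \<Rightarrow> nat \<Rightarrow> F2" where
  "L0 k a i = (if i = 4*k - 3 then 1 else 0) + (if i = 0 then a 0
     else if 1 \<le> i \<and> i + 4 \<le> 4*k \<and> (i - 1) mod 4 = 0 then a (i + 3)
     else if 1 \<le> i \<and> i + 4 \<le> 4*k \<and> (i - 1) mod 4 = 3 then a i else 0)"

context fixes k q :: nat assumes q: "q + 2 \<le> k"
begin
lemma sig0_r: "sig0 k (4*q+1) = 4*q+2" "sig0 k (4*q+2) = 4*q+3" "sig0 k (4*q+3) = 4*q+4"
  "sig0 k (4*q+4) = 4*q+2"
  using q by (auto simp: sig0_def)
lemma L0_r: "L0 k a (4*q+1) = a (4*q+4)" "L0 k a (4*q+2) = 0" "L0 k a (4*q+3) = 0"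
  "L0 k a (4*q+4) = a (4*q+4)"
  using q by (auto simp: L0_def) (metis add.commute)
lemma J0_r: "4*q+1 \<notin> J0 k" "4*q+2 \<notin> J0 k" "4*q+3 \<notin> J0 k" "4*q+4 \<in> J0 k"
  using q by (auto simp: J0_def)
end

context fixes k :: nat assumes k: "2 \<le> k"
begin
lemma sig0_s: "sig0 k 0 = 4*k" "sig0 k (4*k-3) = 4*k-2" "sig0 k (4*k-2) = 4*k-1"
  using k by (auto simp: sig0_def)
lemma L0_s: "L0 k a 0 = a 0" "L0 k a (4*k-3) = 1" "L0 k a (4*k-2) = 0" "L0 k a (4*k-1) = 0"
  using k by (auto simp: L0_def)
lemma J0_s: "0 \<in> J0 k" "4*k-3 \<notin> J0 k" "4*k-2 \<notin> J0 k" "4*k-1 \<in> J0 k" "4*k \<notin> J0 k"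
  using k by (auto simp: J0_def)
end

lemma mat_mult_zero_vec: "(A :: 'a :: semiring_0 mat) \<in> carrier_mat n m \<Longrightarrow> A *\<^sub>v 0\<^sub>v m = 0\<^sub>v n"
  by (rule eq_vecI, auto)

lemma case0:
  fixes C :: "F2 mat" and k :: nat
  assumes k: "2 \<le> k" and C: "C \<in> carrier_mat (4*k) (4*k)"
    and Cs: "\<And>i r. i < 4*k - 1 \<Longrightarrow> r < 4*k \<Longrightarrow> C $$ (r, i) = (if r = Suc i then 1 else 0)"
    and c0: "C $$ (4*k-1, 4*k-1) = 0"
  shows "\<exists>N0 D0. N0 \<in> carrier_mat (4*k) (4*k) \<and> D0 \<in> carrier_mat (4*k) (4*k) \<and> C = N0 + D0 \<and>
     N0 * N0 = 0\<^sub>m (4*k) (4*k) \<and> D0 ^\<^sub>m 4 = D0"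
proof -
  define n where "n = 4 * k"
  define a where "a i = C $$ (i, n - 1)" for i
  define \<sigma> where "\<sigma> = sig0 k"
  define L where "L = L0 k a"
  define J where "J = J0 k"
  define D where "D = Dmat n \<sigma> L"
  have n8: "8 \<le> n" using k unfolding n_def by simp
  have D: "D \<in> carrier_mat n n" unfolding D_def by simp
  note sr = sig0_r[where k = k, folded \<sigma>_def] and ss = sig0_s[OF k, folded \<sigma>_def n_def]
  note Lr = L0_r[where k = k and a = a, folded L_def] and Ls = L0_s[OF k, of a, folded L_def n_def]
  note Jr = J0_r[where k = k, folded J_def] and Js = J0_s[OF k, folded J_def n_def]
  have pos: "i = 0 \<or> (\<exists>q. q + 2 \<le> k \<and> (i = 4*q+1 \<or> i = 4*q+2 \<or> i = 4*q+3 \<or> i = 4*q+4))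
     \<or> i = n-3 \<or> i = n-2 \<or> i = n-1" if "i < n" for i
    using pos0[of i k] that k unfolding n_def by auto
  have sq: "(C - D) * (C - D) = 0\<^sub>m n n"
    unfolding D_def
  proof (rule Dmat_sqzero[of C n J])
    show "C \<in> carrier_mat n n" using C unfolding n_def .
    show "\<And>i r. i < n - 1 \<Longrightarrow> r < n \<Longrightarrow> C $$ (r, i) = (if r = Suc i then 1 else 0)"
      using Cs unfolding n_def .
    show "n - 1 \<in> J" using Js by simp
  next
    fix j assume j: "j < n - 1" "j \<notin> J"
    have jn: "j < n" using j by simp
    from pos[OF jn] show "\<sigma> j = Suc j"
    proof (elim disjE exE conjE)
      fix q assume "q + 2 \<le> k" "j = 4 * q + 4"
      thus ?thesis using Jr[of q] j by simp
    qed (use Js sr ss j n8 in auto)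
  next
    fix j assume j: "j < n - 1" "j \<in> J"
    have jn: "j < n" using j by simp
    from pos[OF jn] show "Suc j \<notin> J \<and> \<sigma> j \<notin> J"
    proof (elim disjE exE conjE)
      assume "j = 0" thus ?thesis using Jr[of 0] k ss Js by simp
    next
      fix q assume q: "q + 2 \<le> k" "j = 4 * q + 4"
      have "Suc j \<notin> J"
      proof (cases "q + 3 \<le> k")
        case True
        then show ?thesis using Jr[of "Suc q"] q by simp
      next
        case False
        hence "Suc j = n - 3" using q unfolding n_def by simp
        then show ?thesis using Js by simp
      qed
      moreover have "\<sigma> j \<notin> J" using sr[OF q(1)] Jr[OF q(1)] q by simp
      ultimately show ?thesis ..
    qed (use Jr Js j n8 in auto)
  next
    fix i assume i: "i < n" "i \<in> J"
    from pos[OF i(1)] show "L i = C $$ (i, n - 1)"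
    proof (elim disjE exE conjE)
      assume "i = n - 1" thus ?thesis using Ls c0 unfolding n_def by simp
    qed (use Ls Lr Jr Js a_def i in auto)
  qed
  have shape: "\<sigma> l = Suc l \<or> \<sigma> l + 2 = l \<or> n \<le> \<sigma> l" if "l < n - 1" for l
  proof -
    have ln: "l < n" using that by simp
    from pos[OF ln] show ?thesis
    proof (elim disjE exE conjE)
    qed (use sr ss n8 that in auto)
  qed
  have step: "D *\<^sub>v unit_vec n m = unit_vec n (\<sigma> m)" if "m < n" "m \<noteq> n - 1" "\<sigma> m < n" for m
    unfolding D_def using Dmat_col[OF that(1)] that by simp
  have stepL: "D *\<^sub>v unit_vec n (n - 1) = vec n L"
    unfolding D_def using Dmat_col[of "n - 1" n] n8 by simp
  have KEY: "D *\<^sub>v vec n L = unit_vec n (n - 2)"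
  proof (rule eq_vecI)
    fix i assume "i < dim_vec (unit_vec n (n - 2))"
    hence i: "i < n" by simp
    have L1: "L (n - 1) = 0" using Ls unfolding n_def by simp
    have "(D *\<^sub>v vec n L) $ i = (if \<sigma> (i - 1) = i then L (i - 1) else 0)
      + (if i + 2 < n - 1 \<and> \<sigma> (i + 2) = i then L (i + 2) else 0)"
      unfolding D_def using Dmat_mult[of n \<sigma> "vec n L" i L, OF shape _ i] i n8 L1 by auto
    also have "\<dots> = (if i = n - 2 then 1 else 0)"
      using pos[OF i]
    proof (elim disjE exE conjE)
      assume i0: "i = 0"
      show ?thesis using i0 ss sr[of 0] k n8 by simp
    next
      fix q assume q: "q + 2 \<le> k" "i = 4 * q + 1"
      have h1: "\<sigma> (i - 1) \<noteq> i"
      proof (cases q)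
        case 0
        hence e: "i - 1 = 0" "i = 1" using q by simp_all
        show ?thesis unfolding e using ss(1) n8 by simp
      next
        case (Suc q')
        hence e: "i - 1 = 4 * q' + 4" using q by simp
        have "\<sigma> (4 * q' + 4) = 4 * q' + 2" using sr(4)[of q'] q Suc by simp
        thus ?thesis unfolding e using q Suc by linarith
      qed
      have e2: "i + 2 = 4 * q + 3" using q by simp
      have h2: "\<sigma> (i + 2) \<noteq> i" unfolding e2 using sr(3)[OF q(1)] q(2) by linarith
      have ne: "i \<noteq> n - 2" using q unfolding n_def by simp
      show ?thesis using h1 h2 ne by simp
    next
      fix q assume q: "q + 2 \<le> k" "i = 4 * q + 2"
      have e1: "i - 1 = 4 * q + 1" and e2: "i + 2 = 4 * q + 4" using q by simp_all
      have h1: "\<sigma> (i - 1) = i" unfolding e1 using sr(1)[OF q(1)] q(2) by linarith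
      have h2: "\<sigma> (i + 2) = i" unfolding e2 using sr(4)[OF q(1)] q(2) by linarith
      have l1: "L (i - 1) = a (4 * q + 4)" unfolding e1 by (rule Lr(1)[OF q(1)])
      have l2: "L (i + 2) = a (4 * q + 4)" unfolding e2 by (rule Lr(4)[OF q(1)])
      have lt: "i + 2 < n - 1" and ne: "i \<noteq> n - 2" using q unfolding n_def by simp_all
      show ?thesis using h1 h2 l1 l2 lt ne by simp
    next
      fix q assume q: "q + 2 \<le> k" "i = 4 * q + 3"
      have e1: "i - 1 = 4 * q + 2" using q by simp_all
      have h1: "\<sigma> (i - 1) = i" unfolding e1 using sr(2)[OF q(1)] q(2) by linarith
      have l1: "L (i - 1) = 0" unfolding e1 by (rule Lr(2)[OF q(1)])
      have h2: "\<sigma> (i + 2) \<noteq> i"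
      proof (cases "q + 3 \<le> k")
        case True
        hence e2: "i + 2 = 4 * Suc q + 1" using q by simp
        show ?thesis unfolding e2 using sr(1)[of "Suc q"] True q(2) by simp
      next
        case False
        hence e2: "i + 2 = n - 3" using q unfolding n_def by simp
        show ?thesis unfolding e2 using ss(2) q False unfolding n_def by simp
      qed
      have ne: "i \<noteq> n - 2" using q unfolding n_def by simp
      show ?thesis using h1 h2 l1 ne by simp
    next
      fix q assume q: "q + 2 \<le> k" "i = 4 * q + 4"
      have e1: "i - 1 = 4 * q + 3" using q by simp_all
      have h1: "\<sigma> (i - 1) = i" unfolding e1 using sr(3)[OF q(1)] q(2) by linarith
      have l1: "L (i - 1) = 0" unfolding e1 by (rule Lr(3)[OF q(1)])
      have h2: "\<sigma> (i + 2) \<noteq> i"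
      proof (cases "q + 3 \<le> k")
        case True
        hence e2: "i + 2 = 4 * Suc q + 2" using q by simp
        show ?thesis unfolding e2 using sr(2)[of "Suc q"] True q(2) by simp
      next
        case False
        hence e2: "i + 2 = n - 2" using q unfolding n_def by simp
        show ?thesis unfolding e2 using ss(3) q False unfolding n_def by simp
      qed
      have ne: "i \<noteq> n - 2" using q unfolding n_def by simp
      show ?thesis using h1 h2 l1 ne by simp
    next
      assume i3: "i = n - 3"
      have e1: "i - 1 = 4 * (k - 2) + 4" using i3 k unfolding n_def by simp
      have "\<sigma> (4 * (k - 2) + 4) = 4 * (k - 2) + 2" using sr(4)[of "k - 2"] k by simp
      hence h1: "\<sigma> (i - 1) \<noteq> i" unfolding e1 using i3 k unfolding n_def by linarith
      have nlt: "\<not> i + 2 < n - 1" and ne: "i \<noteq> n - 2" using i3 n8 by simp_all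
      show ?thesis using h1 nlt ne by simp
    next
      assume i2: "i = n - 2"
      have e1: "i - 1 = n - 3" using i2 n8 by simp
      have h1: "\<sigma> (i - 1) = i" by (subst e1, subst i2, rule ss(2))
      have l1: "L (i - 1) = 1" unfolding e1 by (rule Ls(2))
      have nlt: "\<not> i + 2 < n - 1" using i2 n8 by simp
      show ?thesis using h1 l1 nlt i2 by simp
    next
      assume i1: "i = n - 1"
      have e1: "i - 1 = n - 2" using i1 n8 by simp
      have h1: "\<sigma> (i - 1) = i" by (subst e1, subst i1, rule ss(3))
      have l1: "L (i - 1) = 0" unfolding e1 by (rule Ls(3))
      have nlt: "\<not> i + 2 < n - 1" and ne: "i \<noteq> n - 2" using i1 n8 by simp_all
      show ?thesis using h1 l1 nlt ne by simp
    qed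
    also have "\<dots> = unit_vec n (n - 2) $ i" using i by simp
    finally show "(D *\<^sub>v vec n L) $ i = unit_vec n (n - 2) $ i" .
  qed (use D in simp)
  have reg: "D *\<^sub>v unit_vec n (4 * q + 1) = unit_vec n (4 * q + 2) \<and>
     D *\<^sub>v unit_vec n (4 * q + 2) = unit_vec n (4 * q + 3) \<and>
     D *\<^sub>v unit_vec n (4 * q + 3) = unit_vec n (4 * q + 4) \<and>
     D *\<^sub>v unit_vec n (4 * q + 4) = unit_vec n (4 * q + 2)" if q: "q + 2 \<le> k" for q
  proof -
    have lt: "4 * q + 4 < n - 1" using q unfolding n_def by simp
    show ?thesis using step[of "4*q+1"] step[of "4*q+2"] step[of "4*q+3"] step[of "4*q+4"] sr[OF q] lt by simp
  qed
  have pot: "D ^\<^sub>m 4 = D"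
  proof (rule potent_cols[OF D])
    fix j assume j: "j < n"
    have s1: "D *\<^sub>v unit_vec n (n - 2) = unit_vec n (n - 1)"
      using step[of "n - 2"] ss n8 unfolding n_def by simp
    have s3: "D *\<^sub>v unit_vec n (n - 3) = unit_vec n (n - 2)"
      using step[of "n - 3"] ss n8 unfolding n_def by simp
    from pos[OF j] show "D *\<^sub>v (D *\<^sub>v (D *\<^sub>v (D *\<^sub>v unit_vec n j))) = D *\<^sub>v unit_vec n j"
    proof (elim disjE exE conjE)
      assume "j = 0"
      hence "D *\<^sub>v unit_vec n j = 0\<^sub>v n" unfolding D_def using Dmat_col[of j n] ss n8 by simp
      thus ?thesis using mat_mult_zero_vec[OF D] by simp
    next
      fix q assume q: "q + 2 \<le> k" and r: "j = 4 * q + 1"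
      show ?thesis using reg[OF q] r by simp
    next
      fix q assume q: "q + 2 \<le> k" and r: "j = 4 * q + 2"
      show ?thesis using reg[OF q] r by simp
    next
      fix q assume q: "q + 2 \<le> k" and r: "j = 4 * q + 3"
      show ?thesis using reg[OF q] r by simp
    next
      fix q assume q: "q + 2 \<le> k" and r: "j = 4 * q + 4"
      show ?thesis using reg[OF q] r by simp
    next
      assume "j = n - 3" thus ?thesis using s1 s3 stepL KEY by simp
    next
      assume "j = n - 2" thus ?thesis using s1 stepL KEY by simp
    next
      assume "j = n - 1" thus ?thesis using s1 stepL KEY by simp
    qed
  qed
  have dec: "C = (C - D) + D"
    by (rule eq_matI, insert C D, auto simp: n_def)
  show ?thesis
    by (intro exI[of _ "C - D"] exI[of _ D] conjI, insert dec sq pot D C, auto simp: n_def minus_carrier_mat)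
qed

lemma pos1: fixes i k :: nat assumes "i < 4*k" "2 \<le> k"
  shows "i < 6 \<or> (\<exists>q. q + 3 \<le> k \<and> (i = 4*q+6 \<or> i = 4*q+7 \<or> i = 4*q+8 \<or> i = 4*q+9))
     \<or> i = 4*k-2 \<or> i = 4*k-1"
proof (cases "6 \<le> i \<and> i + 3 \<le> 4 * k")
  case True
  define q where "q = (i - 6) div 4"
  define r where "r = (i - 6) mod 4"
  have i: "i = 4 * q + r + 6" unfolding q_def r_def using True by simp
  have r: "r < 4" unfolding r_def by simp
  have "q + 3 \<le> k" using True i by linarith
  moreover have "i = 4*q+6 \<or> i = 4*q+7 \<or> i = 4*q+8 \<or> i = 4*q+9" using i r by linarith
  ultimately show ?thesis by blast
next
  case False
  then show ?thesis using assms by linarith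
qed

definition sig1 :: "nat \<Rightarrow> nat \<Rightarrow> nat" where
  "sig1 k j = (if j = 2 then 0 else if j = 5 then 3
     else if 6 \<le> j \<and> j + 3 \<le> 4*k \<and> (j - 6) mod 4 = 3 then j - 2 else Suc j)"

definition J1 :: "nat \<Rightarrow> nat set" where
  "J1 k = {j. j = 2 \<or> j = 5 \<or> j = 4*k - 1 \<or> (6 \<le> j \<and> j + 3 \<le> 4*k \<and> (j - 6) mod 4 = 3)}"

definition u4 :: "nat \<Rightarrow> (nat \<Rightarrow> F2) \<Rightarrow> nat \<Rightarrow> F2" where
  "u4 k a i = (if 6 \<le> i \<and> i + 3 \<le> 4*k \<and> (i - 6) mod 4 = 0 then a (i + 3)
     else if 6 \<le> i \<and> i + 3 \<le> 4*k \<and> (i - 6) mod 4 = 3 then a i else 0)"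

definition L1 :: "nat \<Rightarrow> (nat \<Rightarrow> F2) \<Rightarrow> nat \<Rightarrow> F2" where
  "L1 k a i = (if i = 4*k - 2 then 1 else 0) + (if i = 4*k - 1 then 1 else 0) +
     (if i \<le> 2 then a 2 else if i \<le> 5 then a 5 else 0) + u4 k a i"

definition X1 :: "nat \<Rightarrow> (nat \<Rightarrow> F2) \<Rightarrow> nat \<Rightarrow> F2" where
  "X1 k a i = (if i = 4*k - 2 then 1 else 0) + u4 k a i"

context fixes k q :: nat assumes q: "q + 3 \<le> k"
begin
lemma sig1_r: "sig1 k (4*q+6) = 4*q+7" "sig1 k (4*q+7) = 4*q+8" "sig1 k (4*q+8) = 4*q+9"
  "sig1 k (4*q+9) = 4*q+7"
  using q by (auto simp: sig1_def)
lemma L1_r: "L1 k a (4*q+6) = a (4*q+9)" "L1 k a (4*q+7) = 0" "L1 k a (4*q+8) = 0"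
  "L1 k a (4*q+9) = a (4*q+9)"
  using q by (auto simp: L1_def u4_def) (metis add.commute)
lemma X1_r: "X1 k a (4*q+6) = a (4*q+9)" "X1 k a (4*q+7) = 0" "X1 k a (4*q+8) = 0"
  "X1 k a (4*q+9) = a (4*q+9)"
  using q by (auto simp: X1_def u4_def) (metis add.commute)
lemma J1_r: "4*q+6 \<notin> J1 k" "4*q+7 \<notin> J1 k" "4*q+8 \<notin> J1 k" "4*q+9 \<in> J1 k"
  using q by (auto simp: J1_def)
end

context fixes k :: nat assumes k0: "2 \<le> k"
begin
lemma k: "2 \<le> k" "6 \<le> 4 * k - 2" "7 \<le> 4 * k - 1" "5 \<le> 4 * k - 3" using k0 by auto
lemma sig1_s: "sig1 k 0 = 1" "sig1 k 1 = 2" "sig1 k 2 = 0" "sig1 k 3 = 4" "sig1 k 4 = 5" "sig1 k 5 = 3"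
  "sig1 k 6 = 7" "sig1 k 7 = 8" "sig1 k (4*k-2) = 4*k-1"
  using k by (auto simp: sig1_def)
lemma sig1_s2: "sig1 k (4*k-3) = 4*k-5"
proof (cases "k = 2")
  case True thus ?thesis by (simp add: sig1_def)
next
  case False
  define m where "m = k - 3"
  have m: "k = m + 3" using False k unfolding m_def by simp
  have "sig1 k (4*m+9) = 4*m+7" using sig1_r(4)[of m k] m by simp
  moreover have "4*k-3 = 4*m+9" "4*k-5 = 4*m+7" using m by simp_all
  ultimately show ?thesis by simp
qed
lemma L1_s: "L1 k a 0 = a 2" "L1 k a 1 = a 2" "L1 k a 2 = a 2" "L1 k a 3 = a 5" "L1 k a 4 = a 5"
  "L1 k a 5 = a 5" "L1 k a (4*k-2) = 1" "L1 k a (4*k-1) = 1"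
  using k by (simp_all add: L1_def u4_def)
lemma X1_s: "X1 k a 0 = 0" "X1 k a 1 = 0" "X1 k a 2 = 0" "X1 k a 3 = 0" "X1 k a 4 = 0"
  "X1 k a 5 = 0" "X1 k a (4*k-2) = 1" "X1 k a (4*k-1) = 0"
  using k by (simp_all add: X1_def u4_def)
lemma J1_s: "0 \<notin> J1 k" "1 \<notin> J1 k" "2 \<in> J1 k" "3 \<notin> J1 k" "4 \<notin> J1 k" "5 \<in> J1 k"
  "6 \<notin> J1 k" "4*k-2 \<notin> J1 k" "4*k-1 \<in> J1 k"
  using k by (auto simp: J1_def)
end

lemma case1:
  fixes C :: "F2 mat" and k :: nat
  assumes k: "2 \<le> k" and C: "C \<in> carrier_mat (4*k) (4*k)"
    and Cs: "\<And>i r. i < 4*k - 1 \<Longrightarrow> r < 4*k \<Longrightarrow> C $$ (r, i) = (if r = Suc i then 1 else 0)"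
    and c1: "C $$ (4*k-1, 4*k-1) = 1"
  shows "\<exists>N0 D0. N0 \<in> carrier_mat (4*k) (4*k) \<and> D0 \<in> carrier_mat (4*k) (4*k) \<and> C = N0 + D0 \<and>
     N0 * N0 = 0\<^sub>m (4*k) (4*k) \<and> D0 ^\<^sub>m 4 = D0"
proof -
  define n where "n = 4 * k"
  define a where "a i = C $$ (i, n - 1)" for i
  define \<sigma> where "\<sigma> = sig1 k"
  define L where "L = L1 k a"
  define X where "X = X1 k a"
  define J where "J = J1 k"
  define D where "D = Dmat n \<sigma> L"
  have n8: "8 \<le> n" "6 \<le> n - 2" using k unfolding n_def by auto
  have D: "D \<in> carrier_mat n n" unfolding D_def by simp
  note sr = sig1_r[where k = k, folded \<sigma>_def] and ss = sig1_s[OF k, folded \<sigma>_def n_def]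
    and ss2 = sig1_s2[OF k, folded \<sigma>_def n_def]
  note Lr = L1_r[where k = k and a = a, folded L_def] and Ls = L1_s[OF k, of a, folded L_def n_def]
  note Xr = X1_r[where k = k and a = a, folded X_def] and Xs = X1_s[OF k, of a, folded X_def n_def]
  note Jr = J1_r[where k = k, folded J_def] and Js = J1_s[OF k, folded J_def n_def]
  have pos: "i = 0 \<or> i = 1 \<or> i = 2 \<or> i = 3 \<or> i = 4 \<or> i = 5 \<or>
     (\<exists>q. q + 3 \<le> k \<and> (i = 4*q+6 \<or> i = 4*q+7 \<or> i = 4*q+8 \<or> i = 4*q+9))
     \<or> i = n-2 \<or> i = n-1" if "i < n" for i
  proof -
    have "i < 6 \<or> (\<exists>q. q + 3 \<le> k \<and> (i = 4*q+6 \<or> i = 4*q+7 \<or> i = 4*q+8 \<or> i = 4*q+9))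
     \<or> i = n-2 \<or> i = n-1" using pos1[of i k] that k unfolding n_def by auto
    moreover have "i < 6 \<Longrightarrow> i = 0 \<or> i = 1 \<or> i = 2 \<or> i = 3 \<or> i = 4 \<or> i = 5" by presburger
    ultimately show ?thesis by blast
  qed
  have sq: "(C - D) * (C - D) = 0\<^sub>m n n"
    unfolding D_def
  proof (rule Dmat_sqzero[of C n J])
    show "C \<in> carrier_mat n n" using C unfolding n_def .
    show "\<And>i r. i < n - 1 \<Longrightarrow> r < n \<Longrightarrow> C $$ (r, i) = (if r = Suc i then 1 else 0)"
      using Cs unfolding n_def .
    show "n - 1 \<in> J" using Js by simp
  next
    fix j assume j: "j < n - 1" "j \<notin> J"
    have jn: "j < n" using j by simp
    from pos[OF jn] show "\<sigma> j = Suc j"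
    proof (elim disjE exE conjE)
      fix q assume "q + 3 \<le> k" "j = 4 * q + 9"
      thus ?thesis using Jr[of q] j by simp
    next
      assume l: "j = n - 2"
      have "\<sigma> j = n - 1" using ss(9) l by simp
      moreover have "n - 1 = Suc j" using l n8 by simp
      ultimately show ?thesis by simp
    qed (use Js sr ss j n8 in auto)
  next
    fix j assume j: "j < n - 1" "j \<in> J"
    have jn: "j < n" using j by simp
    from pos[OF jn] show "Suc j \<notin> J \<and> \<sigma> j \<notin> J"
    proof (elim disjE exE conjE)
      fix q assume q: "q + 3 \<le> k" "j = 4 * q + 9"
      have "Suc j \<notin> J"
      proof (cases "q + 4 \<le> k")
        case True
        hence "Suc j = 4 * Suc q + 6" "Suc q + 3 \<le> k" using q by simp_all
        then show ?thesis using Jr(1)[of "Suc q"] by simp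
      next
        case False
        hence "Suc j = n - 2" using q unfolding n_def by simp
        then show ?thesis using Js by simp
      qed
      moreover have "\<sigma> j \<notin> J" using sr[OF q(1)] Jr[OF q(1)] q by simp
      ultimately show ?thesis ..
    qed (use Jr Js ss j n8 in auto)
  next
    fix i assume i: "i < n" "i \<in> J"
    from pos[OF i(1)] show "L i = C $$ (i, n - 1)"
    proof (elim disjE exE conjE)
      assume "i = n - 1" thus ?thesis using Ls c1 unfolding n_def by simp
    qed (use Ls Lr Jr Js a_def i in auto)
  qed
  have shape: "\<sigma> l = Suc l \<or> \<sigma> l + 2 = l \<or> n \<le> \<sigma> l" if "l < n - 1" for l
  proof -
    have ln: "l < n" using that by simp
    from pos[OF ln] show ?thesis
    proof (elim disjE exE conjE)
      assume l: "l = n - 2"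
      have "\<sigma> l = n - 1" using ss(9) l by simp
      moreover have "n - 1 = Suc l" using l n8 by simp
      ultimately show ?thesis by simp
    qed (use sr ss n8 that in auto)
  qed
  have step: "D *\<^sub>v unit_vec n m = unit_vec n (\<sigma> m)" if "m < n" "m \<noteq> n - 1" "\<sigma> m < n" for m
    unfolding D_def using Dmat_col[OF that(1)] that by simp
  have stepL: "D *\<^sub>v unit_vec n (n - 1) = vec n L"
    unfolding D_def using Dmat_col[of "n - 1" n] n8 by simp
  have L1: "L (n - 1) = 1" and X1: "X (n - 1) = 0" using Ls Xs by auto
  have both: "(if \<sigma> (i - 1) = i then L (i - 1) else 0)
      + (if i + 2 < n - 1 \<and> \<sigma> (i + 2) = i then L (i + 2) else 0) + L i = X i \<and>
      (if \<sigma> (i - 1) = i then X (i - 1) else 0)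
      + (if i + 2 < n - 1 \<and> \<sigma> (i + 2) = i then X (i + 2) else 0) = (if i = n - 1 then 1 else 0)"
    if i: "i < n" for i
    using pos[OF i]
  proof (elim disjE exE conjE)
    assume i0: "i = 0"
    have e: "i - 1 = 0" "i + 2 = 2" using i0 by simp_all
    show ?thesis unfolding e using ss Ls Xs n8 i0 by simp
  next
    assume i0: "i = 1"
    have e: "i - 1 = 0" "i + 2 = 3" using i0 by simp_all
    show ?thesis unfolding e using ss Ls Xs n8 i0 by simp
  next
    assume i0: "i = 2"
    have e: "i - 1 = 1" "i + 2 = 4" using i0 by simp_all
    show ?thesis unfolding e using ss Ls Xs n8 i0 by simp
  next
    assume i0: "i = 3"
    have e: "i - 1 = 2" "i + 2 = 5" using i0 by simp_all
    show ?thesis unfolding e using ss Ls Xs n8 i0 by simp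
  next
    assume i0: "i = 4"
    have e: "i - 1 = 3" "i + 2 = 6" using i0 by simp_all
    show ?thesis unfolding e using ss Ls Xs n8 i0 by simp
  next
    assume i0: "i = 5"
    have e: "i - 1 = 4" "i + 2 = 7" using i0 by simp_all
    show ?thesis unfolding e using ss Ls Xs n8 i0 by simp
  next
    fix q assume q: "q + 3 \<le> k" "i = 4 * q + 6"
    have h1: "\<sigma> (i - 1) \<noteq> i"
    proof (cases q)
      case 0
      hence e: "i - 1 = 5" "i = 6" using q by simp_all
      show ?thesis unfolding e using ss by simp
    next
      case (Suc q')
      hence e: "i - 1 = 4 * q' + 9" using q by simp
      have "\<sigma> (4 * q' + 9) = 4 * q' + 7" using sr(4)[of q'] q Suc by simp
      thus ?thesis unfolding e using q Suc by linarith
    qed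
    have e2: "i + 2 = 4 * q + 8" using q by simp
    have h2: "\<sigma> (i + 2) \<noteq> i" unfolding e2 using sr(3)[OF q(1)] q(2) by linarith
    have li: "L i = a (4 * q + 9)" unfolding q(2) by (rule Lr(1)[OF q(1)])
    have xi: "X i = a (4 * q + 9)" unfolding q(2) by (rule Xr(1)[OF q(1)])
    have ne: "i \<noteq> n - 1" using q unfolding n_def by simp
    show ?thesis using h1 h2 li xi ne by simp
  next
    fix q assume q: "q + 3 \<le> k" "i = 4 * q + 7"
    have e1: "i - 1 = 4 * q + 6" and e2: "i + 2 = 4 * q + 9" using q by simp_all
    have h1: "\<sigma> (i - 1) = i" unfolding e1 using sr(1)[OF q(1)] q(2) by linarith
    have h2: "\<sigma> (i + 2) = i" unfolding e2 using sr(4)[OF q(1)] q(2) by linarith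
    have l1: "L (i - 1) = a (4 * q + 9)" unfolding e1 by (rule Lr(1)[OF q(1)])
    have l2: "L (i + 2) = a (4 * q + 9)" unfolding e2 by (rule Lr(4)[OF q(1)])
    have x1: "X (i - 1) = a (4 * q + 9)" unfolding e1 by (rule Xr(1)[OF q(1)])
    have x2: "X (i + 2) = a (4 * q + 9)" unfolding e2 by (rule Xr(4)[OF q(1)])
    have li: "L i = 0" unfolding q(2) by (rule Lr(2)[OF q(1)])
    have xi: "X i = 0" unfolding q(2) by (rule Xr(2)[OF q(1)])
    have lt: "i + 2 < n - 1" and ne: "i \<noteq> n - 1" using q unfolding n_def by simp_all
    show ?thesis using h1 h2 l1 l2 x1 x2 li xi lt ne by simp
  next
    fix q assume q: "q + 3 \<le> k" "i = 4 * q + 8"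
    have e1: "i - 1 = 4 * q + 7" using q by simp_all
    have h1: "\<sigma> (i - 1) = i" unfolding e1 using sr(2)[OF q(1)] q(2) by linarith
    have l1: "L (i - 1) = 0" unfolding e1 by (rule Lr(2)[OF q(1)])
    have x1: "X (i - 1) = 0" unfolding e1 by (rule Xr(2)[OF q(1)])
    have h2: "\<sigma> (i + 2) \<noteq> i"
    proof (cases "q + 4 \<le> k")
      case True
      hence e2: "i + 2 = 4 * Suc q + 6" and q': "Suc q + 3 \<le> k" using q by simp_all
      show ?thesis unfolding e2 using sr(1)[OF q'] q(2) by simp
    next
      case False
      hence e2: "i + 2 = n - 2" using q unfolding n_def by simp
      show ?thesis unfolding e2 using ss q False unfolding n_def by simp
    qed
    have li: "L i = 0" unfolding q(2) by (rule Lr(3)[OF q(1)])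
    have xi: "X i = 0" unfolding q(2) by (rule Xr(3)[OF q(1)])
    have ne: "i \<noteq> n - 1" using q unfolding n_def by simp
    show ?thesis using h1 h2 l1 x1 li xi ne by simp
  next
    fix q assume q: "q + 3 \<le> k" "i = 4 * q + 9"
    have e1: "i - 1 = 4 * q + 8" using q by simp_all
    have h1: "\<sigma> (i - 1) = i" unfolding e1 using sr(3)[OF q(1)] q(2) by linarith
    have l1: "L (i - 1) = 0" unfolding e1 by (rule Lr(3)[OF q(1)])
    have x1: "X (i - 1) = 0" unfolding e1 by (rule Xr(3)[OF q(1)])
    have h2: "\<not> (i + 2 < n - 1 \<and> \<sigma> (i + 2) = i)"
    proof (cases "q + 4 \<le> k")
      case True
      hence e2: "i + 2 = 4 * Suc q + 7" and q': "Suc q + 3 \<le> k" using q by simp_all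
      show ?thesis unfolding e2 using sr(2)[OF q'] q(2) by simp
    next
      case False
      hence "i + 2 = n - 1" using q unfolding n_def by simp
      thus ?thesis by simp
    qed
    have li: "L i = a (4 * q + 9)" unfolding q(2) by (rule Lr(4)[OF q(1)])
    have xi: "X i = a (4 * q + 9)" unfolding q(2) by (rule Xr(4)[OF q(1)])
    have ne: "i \<noteq> n - 1" using q unfolding n_def by simp
    show ?thesis using h1 h2 l1 x1 li xi ne by auto
  next
    assume i2: "i = n - 2"
    have e1: "i - 1 = n - 3" using i2 n8 by simp
    have h1: "\<sigma> (i - 1) \<noteq> i" unfolding e1 i2 using ss2 n8 by simp
    have nlt: "\<not> i + 2 < n - 1" and ne: "i \<noteq> n - 1" using i2 n8 by simp_all
    have li: "L i = 1" and xi: "X i = 1" unfolding i2 using Ls Xs by simp_all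
    show ?thesis using h1 nlt ne li xi by simp
  next
    assume i1: "i = n - 1"
    have e1: "i - 1 = n - 2" using i1 n8 by simp
    have h1: "\<sigma> (i - 1) = i" by (subst e1, subst i1, rule ss(9))
    have l1: "L (i - 1) = 1" and x1: "X (i - 1) = 1" unfolding e1 using Ls Xs by simp_all
    have nlt: "\<not> i + 2 < n - 1" using i1 n8 by simp
    have li: "L i = 1" and xi: "X i = 0" unfolding i1 using Ls Xs by simp_all
    show ?thesis using h1 l1 x1 nlt li xi i1 by simp
  qed
  have KEY1: "D *\<^sub>v vec n L = vec n X"
  proof (rule eq_vecI)
    fix i assume "i < dim_vec (vec n X)"
    hence i: "i < n" by simp
    have "(D *\<^sub>v vec n L) $ i = (if \<sigma> (i - 1) = i then L (i - 1) else 0)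
      + (if i + 2 < n - 1 \<and> \<sigma> (i + 2) = i then L (i + 2) else 0) + L i"
      unfolding D_def using Dmat_mult[of n \<sigma> "vec n L" i L, OF shape _ i] i n8 L1 by auto
    also have "\<dots> = X i" using both[OF i] by simp
    finally show "(D *\<^sub>v vec n L) $ i = vec n X $ i" using i by simp
  qed (use D in simp)
  have KEY2: "D *\<^sub>v vec n X = unit_vec n (n - 1)"
  proof (rule eq_vecI)
    fix i assume "i < dim_vec (unit_vec n (n - 1))"
    hence i: "i < n" by simp
    have "(D *\<^sub>v vec n X) $ i = (if \<sigma> (i - 1) = i then X (i - 1) else 0)
      + (if i + 2 < n - 1 \<and> \<sigma> (i + 2) = i then X (i + 2) else 0)"
      unfolding D_def using Dmat_mult[of n \<sigma> "vec n X" i L, OF shape _ i] i n8 X1 by auto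
    also have "\<dots> = (if i = n - 1 then 1 else 0)" using both[OF i] by simp
    finally show "(D *\<^sub>v vec n X) $ i = unit_vec n (n - 1) $ i" using i by simp
  qed (use D in simp)
  have reg: "D *\<^sub>v unit_vec n (4 * q + 6) = unit_vec n (4 * q + 7) \<and>
     D *\<^sub>v unit_vec n (4 * q + 7) = unit_vec n (4 * q + 8) \<and>
     D *\<^sub>v unit_vec n (4 * q + 8) = unit_vec n (4 * q + 9) \<and>
     D *\<^sub>v unit_vec n (4 * q + 9) = unit_vec n (4 * q + 7)" if q: "q + 3 \<le> k" for q
  proof -
    have lt: "4 * q + 9 < n - 1" using q unfolding n_def by simp
    show ?thesis using step[of "4*q+6"] step[of "4*q+7"] step[of "4*q+8"] step[of "4*q+9"] sr[OF q] lt by simp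
  qed
  have small: "D *\<^sub>v unit_vec n 0 = unit_vec n 1" "D *\<^sub>v unit_vec n 1 = unit_vec n 2"
    "D *\<^sub>v unit_vec n 2 = unit_vec n 0" "D *\<^sub>v unit_vec n 3 = unit_vec n 4"
    "D *\<^sub>v unit_vec n 4 = unit_vec n 5" "D *\<^sub>v unit_vec n 5 = unit_vec n 3"
    using step[of 0] step[of 1] step[of 2] step[of 3] step[of 4] step[of 5] ss n8 by simp_all
  have s1: "D *\<^sub>v unit_vec n (n - 2) = unit_vec n (n - 1)"
    using step[of "n - 2"] ss n8 unfolding n_def by simp
  have pot: "D ^\<^sub>m 4 = D"
  proof (rule potent_cols[OF D])
    fix j assume j: "j < n"
    from pos[OF j] show "D *\<^sub>v (D *\<^sub>v (D *\<^sub>v (D *\<^sub>v unit_vec n j))) = D *\<^sub>v unit_vec n j"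
    proof (elim disjE exE conjE)
      fix q assume q: "q + 3 \<le> k" and r: "j = 4 * q + 6"
      show ?thesis using reg[OF q] r by simp
    next
      fix q assume q: "q + 3 \<le> k" and r: "j = 4 * q + 7"
      show ?thesis using reg[OF q] r by simp
    next
      fix q assume q: "q + 3 \<le> k" and r: "j = 4 * q + 8"
      show ?thesis using reg[OF q] r by simp
    next
      fix q assume q: "q + 3 \<le> k" and r: "j = 4 * q + 9"
      show ?thesis using reg[OF q] r by simp
    next
      assume "j = n - 2" thus ?thesis using s1 stepL KEY1 KEY2 by simp
    next
      assume "j = n - 1" thus ?thesis using s1 stepL KEY1 KEY2 by simp
    qed (use small in simp_all)
  qed
  have dec: "C = (C - D) + D"
    by (rule eq_matI, insert C D, auto simp: n_def)
  show ?thesis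
    by (intro exI[of _ "C - D"] exI[of _ D] conjI, insert dec sq pot D C, auto simp: n_def minus_carrier_mat)
qed

theorem corollary2p8:
  fixes k :: nat and B :: "F2 mat"
  assumes "k \<ge> 2"
    and "B \<in> carrier_mat (4 * k) (4 * k)"
    and "non_derogatory B"
  shows "\<exists>N D. N \<in> carrier_mat (4 * k) (4 * k) \<and> D \<in> carrier_mat (4 * k) (4 * k) \<and>
           B = N + D \<and> N ^\<^sub>m 2 = 0\<^sub>m (4 * k) (4 * k) \<and> D ^\<^sub>m 4 = D"
proof -
  note k = assms(1) and B = assms(2) and nd = assms(3)
  have H: "\<And>q. q \<noteq> 0 \<Longrightarrow> poly_mat q B = 0\<^sub>m (4 * k) (4 * k) \<Longrightarrow> 4 * k \<le> degree q"
    by (rule nonderog_degree[OF B nd])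
  obtain v where v: "v \<in> carrier_vec (4 * k)"
    and cyc: "\<forall>q. q \<noteq> 0 \<longrightarrow> ev B q v = 0\<^sub>v (4 * k) \<longrightarrow> 4 * k \<le> degree q"
    using cyclic_vector[OF B H] by blast
  obtain P Q where P: "P \<in> carrier_mat (4 * k) (4 * k)" and Q: "Q \<in> carrier_mat (4 * k) (4 * k)"
    and PQ: "P * Q = 1\<^sub>m (4 * k)" and QP: "Q * P = 1\<^sub>m (4 * k)"
    and Cs: "\<forall>i r. i < 4 * k - 1 \<longrightarrow> r < 4 * k \<longrightarrow> (Q * B * P) $$ (r, i) = (if r = Suc i then 1 else 0)"
    using krylov_similar[OF B v cyc] by blast
  have C: "Q * B * P \<in> carrier_mat (4 * k) (4 * k)" using P Q B by auto
  have "\<exists>N0 D0. N0 \<in> carrier_mat (4*k) (4*k) \<and> D0 \<in> carrier_mat (4*k) (4*k) \<and> Q * B * P = N0 + D0 \<and>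
     N0 * N0 = 0\<^sub>m (4*k) (4*k) \<and> D0 ^\<^sub>m 4 = D0"
  proof (cases "(Q * B * P) $$ (4*k-1, 4*k-1) = 0")
    case True
    show ?thesis by (rule case0[OF k C _ True], use Cs in blast)
  next
    case False
    hence c1: "(Q * B * P) $$ (4*k-1, 4*k-1) = 1" using F2_cases by blast
    show ?thesis by (rule case1[OF k C _ c1], use Cs in blast)
  qed
  then obtain N0 D0 where N0: "N0 \<in> carrier_mat (4*k) (4*k)" and D0: "D0 \<in> carrier_mat (4*k) (4*k)"
    and dec: "Q * B * P = N0 + D0" and sq: "N0 * N0 = 0\<^sub>m (4*k) (4*k)" and pot: "D0 ^\<^sub>m 4 = D0"
    by blast
  show ?thesis by (rule transfer_conj[OF B P Q PQ QP N0 D0 dec sq pot])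
qed

end
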